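(* Let $\lambda=(n,n)$ with $n\ge1$. Then $$\xi(q)=\sum_k|S_k(\lambda)|q^k=\sum_{i=1}^{n}B(n-1,n-i)(1+q)^i=\sum_{i=1}^n\frac{i}{n}\binom{2n-i-1}{n-i}(1+q)^i,$$ where $B(\alpha,\beta)=\frac{\alpha-\beta+1}{\alpha+1}\binom{\alpha+\beta}{\alpha}$ is the ballot number.
   Context: The shape $(n,n)$ has two rows of $n$ left-justified boxes. A row-standard filling uses $1,\dots,2n$ once each with rows strictly increasing left to right. Inversion pairs of a row-standard $\tau$: for a box $c$ and $r\ge1$ let $c^{(r)}$ be the box $r$ positions to its right, if it exists. For distinct boxes $c,c'$ in the same column with $\tau(c)<\tau(c')$, let $r\ge1$ be least such that one of $c^{(r)},c'^{(r)}$ does not exist or $\tau(c^{(r)})\ne\tau(c'^{(r)})$; $(c,c')$ is an inversion pair if either (one does not exist and $c$ lies below $c'$) or (both exist and $\tau(c^{(r)})>\tau(c'^{(r)})$). $S_k(\lambda)$: row-standard fillings of shape $\lambda$ with exactly $k$ inversion pairs. *)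

theory Defs
  imports Complex_Main
begin

text \<open>Boxes of the shape (n,n): pairs (row, column), row 1 = top row, row 2 = bottom
  row (English convention), columns 1..n.\<close>
definition boxes :: "nat \<Rightarrow> (nat \<times> nat) set" where
  "boxes n = {1,2} \<times> {1..n}"

definition row_standard :: "nat \<Rightarrow> (nat \<times> nat \<Rightarrow> nat) \<Rightarrow> bool" where
  "row_standard n \<tau> \<longleftrightarrow>
     bij_betw \<tau> (boxes n) {1..2*n} \<and>
     (\<forall>x. x \<notin> boxes n \<longrightarrow> \<tau> x = 0) \<and>
     (\<forall>i j j'. (i, j) \<in> boxes n \<longrightarrow> (i, j') \<in> boxes n \<longrightarrow> j < j' \<longrightarrow> \<tau> (i, j) < \<tau> (i, j'))"

definition shift :: "nat \<times> nat \<Rightarrow> nat \<Rightarrow> nat \<times> nat" where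
  "shift c r = (fst c, snd c + r)"

definition exists_box :: "nat \<Rightarrow> nat \<times> nat \<Rightarrow> nat \<Rightarrow> bool" where
  "exists_box n c r \<longleftrightarrow> shift c r \<in> boxes n"

definition below :: "nat \<times> nat \<Rightarrow> nat \<times> nat \<Rightarrow> bool" where
  "below c c' \<longleftrightarrow> fst c > fst c'"

definition stop_cond :: "nat \<Rightarrow> (nat \<times> nat \<Rightarrow> nat) \<Rightarrow> nat \<times> nat \<Rightarrow> nat \<times> nat \<Rightarrow> nat \<Rightarrow> bool" where
  "stop_cond n \<tau> c c' r \<longleftrightarrow>
     \<not> exists_box n c r \<or> \<not> exists_box n c' r \<or> \<tau> (shift c r) \<noteq> \<tau> (shift c' r)"

definition is_inv_pair :: "nat \<Rightarrow> (nat \<times> nat \<Rightarrow> nat) \<Rightarrow> nat \<times> nat \<Rightarrow> nat \<times> nat \<Rightarrow> bool" where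
  "is_inv_pair n \<tau> c c' \<longleftrightarrow>
     c \<in> boxes n \<and> c' \<in> boxes n \<and> c \<noteq> c' \<and> snd c = snd c' \<and> \<tau> c < \<tau> c' \<and>
     (let r = (LEAST r. r \<ge> 1 \<and> stop_cond n \<tau> c c' r) in
        ((\<not> exists_box n c r \<or> \<not> exists_box n c' r) \<and> below c c') \<or>
        (exists_box n c r \<and> exists_box n c' r \<and> \<tau> (shift c r) > \<tau> (shift c' r)))"

definition inv_count :: "nat \<Rightarrow> (nat \<times> nat \<Rightarrow> nat) \<Rightarrow> nat" where
  "inv_count n \<tau> = card {(c, c'). is_inv_pair n \<tau> c c'}"

definition S :: "nat \<Rightarrow> nat \<Rightarrow> (nat \<times> nat \<Rightarrow> nat) set" where
  "S n k = {\<tau>. row_standard n \<tau> \<and> inv_count n \<tau> = k}"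

definition ballot :: "nat \<Rightarrow> nat \<Rightarrow> real" where
  "ballot a b = ((real a - real b + 1) / (real a + 1)) * real ((a + b) choose a)"

end

theory Submission
  imports Defs
begin

lemma ballot_0: "ballot a 0 = 1"
  by (simp add: ballot_def field_simps)

lemma ballot_diag: "ballot (b - 1) b = 0" if "b \<ge> 1"
  using that by (simp add: ballot_def of_nat_diff)

lemma ballot_pascal:
  assumes "1 \<le> b" "b \<le> a"
  shows "ballot a b = ballot (a - 1) b + ballot a (b - 1)"
proof -
  have i: "a * ((a+b) choose a) = (a+b) * ((a+b-1) choose (a-1))"
    using times_binomial_minus1_eq[of a "a+b"] assms by simp
  have s1: "((a+b) choose a) = ((a+b) choose b)" using binomial_symmetric[of a "a+b"] by simp
  have s2: "((a+b-1) choose a) = ((a+b-1) choose (b-1))" using binomial_symmetric[of a "a+b-1"] assms by simp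
  have ii: "b * ((a+b) choose a) = (a+b) * ((a+b-1) choose a)"
    using times_binomial_minus1_eq[of b "a+b"] assms s1 s2 by simp
  define C where "C = real ((a+b) choose a)"
  have e1: "real ((a+b-1) choose (a-1)) = a * C / (a+b)"
    using arg_cong[OF i, of real] assms unfolding C_def by (simp add: field_simps)
  have e2: "real ((a+b-1) choose a) = b * C / (a+b)"
    using arg_cong[OF ii, of real] assms unfolding C_def by (simp add: field_simps)
  have eq1: "a - 1 + b = a + b - 1" "a + (b - 1) = a + b - 1" using assms by auto
  have p: "real a > 0" "real a + real b > 0" "real a + 1 > 0" using assms by auto
  show ?thesis
    unfolding ballot_def eq1 e1 e2 C_def[symmetric]
    using assms p by (simp add: of_nat_diff divide_simps) (simp add: algebra_simps)
qed

definition Rp :: "real \<Rightarrow> nat \<Rightarrow> nat \<Rightarrow> real" where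
  "Rp x a b = (\<Sum>i=0..b. ballot (a - 1) (b - i) * x ^ i)"

definition E :: "real \<Rightarrow> nat \<Rightarrow> real" where
  "E x a = (\<Sum>i=1..a. ballot (a - 1) (a - i) * x ^ (i - 1))"

lemma L3: assumes "a \<ge> 1" shows "E x a = Rp x a (a - 1)"
proof -
  obtain a' where a: "a = Suc a'" using assms by (cases a) auto
  have "E x a = (\<Sum>i=0..a'. ballot a' (Suc a' - Suc i) * x ^ (Suc i - 1))"
    unfolding E_def a using sum.shift_bounds_cl_Suc_ivl[of "\<lambda>i. ballot a' (Suc a' - i) * x ^ (i - 1)" 0 a'] by simp
  then show ?thesis unfolding Rp_def a by simp
qed

lemma L1: assumes "b + 1 < a"
  shows "Rp x a b = Rp x (a - 1) b + (if b \<ge> 1 then Rp x a (b - 1) else 0)"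
proof (cases b)
  case 0 then show ?thesis by (simp add: Rp_def ballot_0)
next
  case (Suc b')
  have pas: "ballot (a - 1) (Suc b' - i) = ballot (a - 1 - 1) (Suc b' - i) + ballot (a - 1) (b' - i)"
    if "i \<le> b'" for i
    using ballot_pascal[of "Suc b' - i" "a - 1"] that assms Suc by (simp add: Suc_diff_le)
  have "Rp x a b = (\<Sum>i=0..b'. ballot (a - 1) (Suc b' - i) * x ^ i) + x ^ Suc b'"
    unfolding Rp_def Suc by (simp add: ballot_0)
  also have "\<dots> = (\<Sum>i=0..b'. ballot (a - 1 - 1) (Suc b' - i) * x ^ i + ballot (a - 1) (b' - i) * x ^ i) + x ^ Suc b'"
    by (intro arg_cong2[where f="(+)"] sum.cong refl) (simp add: pas[simplified] distrib_right)
  also have "\<dots> = (\<Sum>i=0..b'. ballot (a - 1 - 1) (Suc b' - i) * x ^ i) + x ^ Suc b'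
                 + (\<Sum>i=0..b'. ballot (a - 1) (b' - i) * x ^ i)"
    by (simp add: sum.distrib)
  also have "\<dots> = Rp x (a - 1) b + Rp x a (b - 1)"
    unfolding Rp_def Suc by (simp add: ballot_0)
  finally show ?thesis using Suc by simp
qed

lemma xE: "x * E x b = (\<Sum>i=0..b. ballot (b - 1) (b - i) * x ^ i)" if h: "b \<ge> 1"
proof -
  obtain b' where b: "b = Suc b'" using h by (cases b) auto
  have "E x b = (\<Sum>i=0..b'. ballot b' (Suc b' - Suc i) * x ^ (Suc i - 1))"
    unfolding E_def b using sum.shift_bounds_cl_Suc_ivl[of "\<lambda>i. ballot b' (Suc b' - i) * x ^ (i - 1)" 0 b'] by simp
  then have "x * E x b = (\<Sum>i=0..b'. ballot b' (b' - i) * x ^ Suc i)"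
    by (simp add: sum_distrib_left algebra_simps)
  also have "\<dots> = (\<Sum>i=1..Suc b'. ballot b' (Suc b' - i) * x ^ i)"
    using sum.shift_bounds_cl_Suc_ivl[of "\<lambda>i. ballot b' (Suc b' - i) * x ^ i" 0 b'] by simp
  also have "\<dots> = (\<Sum>i=0..Suc b'. ballot b' (Suc b' - i) * x ^ i)"
    using sum.atLeast_Suc_atMost[of 0 "Suc b'" "\<lambda>i. ballot b' (Suc b' - i) * x ^ i"] ballot_diag[of "Suc b'"] by simp
  finally show ?thesis using b by simp
qed

lemma L2: assumes "b \<ge> 1" shows "Rp x (b + 1) b = x * E x b + Rp x (b + 1) (b - 1)"
proof -
  obtain b' where b: "b = Suc b'" using assms by (cases b) auto
  have pas: "ballot (Suc b') (Suc b' - i) = ballot b' (Suc b' - i) + ballot (Suc b') (b' - i)"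
    if "i \<le> b'" for i
    using ballot_pascal[of "Suc b' - i" "Suc b'"] that by (simp add: Suc_diff_le)
  have "Rp x (b + 1) b = (\<Sum>i=0..b'. ballot (Suc b') (Suc b' - i) * x ^ i) + x ^ Suc b'"
    unfolding Rp_def b by (simp add: ballot_0)
  also have "\<dots> = (\<Sum>i=0..b'. ballot b' (Suc b' - i) * x ^ i + ballot (Suc b') (b' - i) * x ^ i) + x ^ Suc b'"
    by (intro arg_cong2[where f="(+)"] sum.cong refl) (simp add: pas[simplified] distrib_right)
  also have "\<dots> = (\<Sum>i=0..b'. ballot b' (Suc b' - i) * x ^ i) + x ^ Suc b'
                 + (\<Sum>i=0..b'. ballot (Suc b') (b' - i) * x ^ i)"
    by (simp add: sum.distrib)
  also have "\<dots> = x * E x b + Rp x (b + 1) (b - 1)"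
    using xE[OF assms] unfolding Rp_def b by (simp add: ballot_0)
  finally show ?thesis .
qed

definition cT :: "bool list \<Rightarrow> nat" where "cT w = length (filter id w)"
definition cF :: "bool list \<Rightarrow> nat" where "cF w = length (filter Not w)"
definition Wd :: "nat \<Rightarrow> nat \<Rightarrow> bool list set" where "Wd a b = {w. cT w = a \<and> cF w = b}"

definition lab :: "bool \<Rightarrow> int \<Rightarrow> bool" where "lab c h = (if c then 0 \<le> h else 1 \<le> h)"

fun stepA :: "int \<times> bool option \<times> nat \<Rightarrow> bool \<Rightarrow> int \<times> bool option \<times> nat" where
  "stepA (h, l, W) c = (if c then h + 1 else h - 1, Some (lab c h),
      W + (if l \<noteq> None \<and> l \<noteq> Some (lab c h) then 1 else 0))"

definition stA :: "bool list \<Rightarrow> int \<times> bool option \<times> nat" where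
  "stA w = foldl stepA (0, None, 0) w"

definition gl :: "real \<Rightarrow> bool \<Rightarrow> bool list \<Rightarrow> real" where
  "gl q l w = (if fst (snd (stA w)) = Some l then q ^ snd (snd (stA w)) else 0)"

definition Phi :: "real \<Rightarrow> nat \<Rightarrow> nat \<Rightarrow> bool \<Rightarrow> real" where
  "Phi q a b l = (\<Sum>w\<in>Wd a b. gl q l w)"

lemma cT_simps[simp]: "cT [] = 0" "cT (w @ [c]) = cT w + (if c then 1 else 0)"
  by (auto simp: cT_def)
lemma cF_simps[simp]: "cF [] = 0" "cF (w @ [c]) = cF w + (if c then 0 else 1)"
  by (auto simp: cF_def)

lemma len_cTF: "length w = cT w + cF w"
  unfolding cT_def cF_def using sum_length_filter_compl[of id w] by (simp add: comp_def)

lemma finite_Wd: "finite (Wd a b)"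
proof -
  have "Wd a b \<subseteq> {xs. set xs \<subseteq> UNIV \<and> length xs = a + b}"
    unfolding Wd_def using len_cTF by auto
  then show ?thesis using finite_lists_length_eq[of "UNIV :: bool set" "a+b"] finite_subset by auto
qed

lemma stA_snoc[simp]: "stA (w @ [c]) = stepA (stA w) c"
  by (simp add: stA_def)
lemma stA_Nil[simp]: "stA [] = (0, None, 0)" by (simp add: stA_def)

lemma stA_h: "fst (stA w) = int (cT w) - int (cF w)"
proof (induction w rule: rev_induct)
  case (snoc x xs)
  obtain h l W where "stA xs = (h,l,W)" by (cases "stA xs") auto
  then show ?case using snoc by auto
qed simp

lemma stA_l: "w \<noteq> [] \<Longrightarrow> fst (snd (stA w)) \<noteq> None"
proof (induction w rule: rev_induct)
  case (snoc x xs)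
  obtain h l W where "stA xs = (h,l,W)" by (cases "stA xs") auto
  then show ?case by auto
qed simp

lemma Wd_split:
  assumes "a + b \<ge> 1"
  shows "sum f (Wd a b) = (if a \<ge> 1 then (\<Sum>v\<in>Wd (a-1) b. f (v @ [True])) else 0)
                        + (if b \<ge> 1 then (\<Sum>v\<in>Wd a (b-1). f (v @ [False])) else 0)"
proof -
  let ?S1 = "{w \<in> Wd a b. w \<noteq> [] \<and> last w}"
  let ?S2 = "{w \<in> Wd a b. w \<noteq> [] \<and> \<not> last w}"
  have ne: "w \<noteq> []" if "w \<in> Wd a b" for w using that assms by (auto simp: Wd_def)
  have un: "Wd a b = ?S1 \<union> ?S2" using ne by auto
  have s: "sum f (Wd a b) = sum f ?S1 + sum f ?S2"
    by (subst un, rule sum.union_disjoint) (auto intro: finite_subset[OF _ finite_Wd])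
  have bl: "w = butlast w @ [last w]" if "w \<noteq> []" for w :: "bool list" using that by simp
  have e1: "?S1 = (\<lambda>v. v @ [True]) ` Wd (a-1) b" if "a \<ge> 1"
  proof
    show "?S1 \<subseteq> (\<lambda>v. v @ [True]) ` Wd (a-1) b"
    proof
      fix w assume w: "w \<in> ?S1"
      then have w2: "w = butlast w @ [True]" using bl[of w] by auto
      have "cT w = cT (butlast w) + 1" "cF w = cF (butlast w)"
        by (subst w2, simp)+
      then have "butlast w \<in> Wd (a-1) b" using w by (auto simp: Wd_def)
      then show "w \<in> (\<lambda>v. v @ [True]) ` Wd (a-1) b" using w2 by blast
    qed
    show "(\<lambda>v. v @ [True]) ` Wd (a-1) b \<subseteq> ?S1" using that by (auto simp: Wd_def)
  qed
  have e2: "?S2 = (\<lambda>v. v @ [False]) ` Wd a (b-1)" if "b \<ge> 1"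
  proof
    show "?S2 \<subseteq> (\<lambda>v. v @ [False]) ` Wd a (b-1)"
    proof
      fix w assume w: "w \<in> ?S2"
      then have w2: "w = butlast w @ [False]" using bl[of w] by auto
      have "cT w = cT (butlast w)" "cF w = cF (butlast w) + 1"
        by (subst w2, simp)+
      then have "butlast w \<in> Wd a (b-1)" using w by (auto simp: Wd_def)
      then show "w \<in> (\<lambda>v. v @ [False]) ` Wd a (b-1)" using w2 by blast
    qed
    show "(\<lambda>v. v @ [False]) ` Wd a (b-1) \<subseteq> ?S2" using that by (auto simp: Wd_def)
  qed
  have z1: "?S1 = {}" if "a = 0"
  proof -
    { fix w assume w: "w \<in> ?S1"
      then have w2: "w = butlast w @ [True]" using bl[of w] by auto
      have "cT w = cT (butlast w) + 1" by (subst w2, simp)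
      then have False using w that by (auto simp: Wd_def) }
    then show ?thesis by blast
  qed
  have z2: "?S2 = {}" if "b = 0"
  proof -
    { fix w assume w: "w \<in> ?S2"
      then have w2: "w = butlast w @ [False]" using bl[of w] by auto
      have "cF w = cF (butlast w) + 1" by (subst w2, simp)
      then have False using w that by (auto simp: Wd_def) }
    then show ?thesis by blast
  qed
  have i1: "inj (\<lambda>v::bool list. v @ [True])" by (auto intro: injI)
  have i2: "inj (\<lambda>v::bool list. v @ [False])" by (auto intro: injI)
  have r1: "sum f ?S1 = (if a \<ge> 1 then (\<Sum>v\<in>Wd (a-1) b. f (v @ [True])) else 0)"
  proof (cases "a \<ge> 1")
    case True
    then show ?thesis using e1 sum.reindex[OF inj_on_subset[OF i1 subset_UNIV], of f "Wd (a-1) b"]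
      by (simp add: comp_def)
  next
    case False then have "a = 0" by simp
    then have e: "?S1 = {}" by (rule z1)
    have "sum f ?S1 = 0" by (simp only: e sum.empty)
    then show ?thesis using False by simp
  qed
  have r2: "sum f ?S2 = (if b \<ge> 1 then (\<Sum>v\<in>Wd a (b-1). f (v @ [False])) else 0)"
  proof (cases "b \<ge> 1")
    case True
    then show ?thesis using e2 sum.reindex[OF inj_on_subset[OF i2 subset_UNIV], of f "Wd a (b-1)"]
      by (simp add: comp_def)
  next
    case False then have "b = 0" by simp
    then have e: "?S2 = {}" by (rule z2)
    have "sum f ?S2 = 0" by (simp only: e sum.empty)
    then show ?thesis using False by simp
  qed
  show ?thesis unfolding s r1 r2 ..
qed

lemma gl_snoc:
  assumes "v \<noteq> []"
  shows "gl q l (v @ [c]) = (if lab c (int (cT v) - int (cF v)) = l then gl q l v + q * gl q (\<not> l) v else 0)"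
proof -
  obtain h l' W where st: "stA v = (h, Some l', W)" using stA_l[OF assms]
    by (metis option.exhaust prod.collapse)
  have h: "h = int (cT v) - int (cF v)" using stA_h[of v] st by simp
  show ?thesis unfolding gl_def using st h by auto
qed

lemma sumU:
  assumes "a \<ge> 1" "a - 1 + b \<ge> 1"
  shows "(\<Sum>v\<in>Wd (a-1) b. gl q l (v @ [True])) = (if (b \<le> a - 1) = l then Phi q (a-1) b l + q * Phi q (a-1) b (\<not>l) else 0)"
proof -
  have ne: "v \<noteq> []" if "v \<in> Wd (a-1) b" for v using that assms by (auto simp: Wd_def)
  have "(\<Sum>v\<in>Wd (a-1) b. gl q l (v @ [True])) = (\<Sum>v\<in>Wd (a-1) b. (if (b \<le> a - 1) = l then gl q l v + q * gl q (\<not> l) v else 0))"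
  proof (intro sum.cong refl)
    fix v assume v: "v \<in> Wd (a-1) b"
    then have "lab True (int (cT v) - int (cF v)) = (b \<le> a - 1)" by (auto simp: lab_def Wd_def)
    then show "gl q l (v @ [True]) = (if (b \<le> a - 1) = l then gl q l v + q * gl q (\<not> l) v else 0)"
      using gl_snoc[of v q l True] v ne by auto
  qed
  then show ?thesis by (simp add: Phi_def sum.distrib sum_distrib_left)
qed

lemma sumD:
  assumes "b \<ge> 1" "a + (b - 1) \<ge> 1"
  shows "(\<Sum>v\<in>Wd a (b-1). gl q l (v @ [False])) = (if (b \<le> a) = l then Phi q a (b-1) l + q * Phi q a (b-1) (\<not>l) else 0)"
proof -
  have ne: "v \<noteq> []" if "v \<in> Wd a (b-1)" for v using that assms by (auto simp: Wd_def)
  have "(\<Sum>v\<in>Wd a (b-1). gl q l (v @ [False])) = (\<Sum>v\<in>Wd a (b-1). (if (b \<le> a) = l then gl q l v + q * gl q (\<not> l) v else 0))"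
  proof (intro sum.cong refl)
    fix v assume v: "v \<in> Wd a (b-1)"
    then have "lab False (int (cT v) - int (cF v)) = (b \<le> a)" using assms by (auto simp: lab_def Wd_def)
    then show "gl q l (v @ [False]) = (if (b \<le> a) = l then gl q l v + q * gl q (\<not> l) v else 0)"
      using gl_snoc[of v q l False] v ne by auto
  qed
  then show ?thesis by (simp add: Phi_def sum.distrib sum_distrib_left)
qed


definition Cl :: "real \<Rightarrow> nat \<Rightarrow> nat \<Rightarrow> bool \<Rightarrow> real" where
  "Cl q a b l = (if b < a then (if l then Rp (1+q) a b else 0)
                 else if a < b then (if l then 0 else Rp (1+q) b a) else E (1+q) a)"

lemma Wd00: "Wd 0 0 = {[]}"
proof -
  have "w = []" if "cT w = 0" "cF w = 0" for w using len_cTF[of w] that by simp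
  then show ?thesis by (auto simp: Wd_def)
qed

lemma gl_single: "gl q l [c] = (if c = l then 1 else 0)"
  by (cases c) (simp_all add: gl_def stA_def lab_def)

lemma Phi_rec:
  assumes "a + b \<ge> 2"
  shows "Phi q a b l = (if a \<ge> 1 then (if (b \<le> a-1) = l then Phi q (a-1) b l + q * Phi q (a-1) b (\<not>l) else 0) else 0)
     + (if b \<ge> 1 then (if (b \<le> a) = l then Phi q a (b-1) l + q * Phi q a (b-1) (\<not>l) else 0) else 0)"
proof -
  have s: "Phi q a b l = (if a \<ge> 1 then (\<Sum>v\<in>Wd (a-1) b. gl q l (v @ [True])) else 0)
                        + (if b \<ge> 1 then (\<Sum>v\<in>Wd a (b-1). gl q l (v @ [False])) else 0)"
    unfolding Phi_def using assms by (intro Wd_split) auto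
  show ?thesis unfolding s using sumU[of a b q l] sumD[of b a q l] assms by auto
qed

lemma Phi_base:
  assumes "a + b = 1"
  shows "Phi q a b l = Cl q a b l"
proof -
  have s: "Phi q a b l = (if a \<ge> 1 then (\<Sum>v\<in>Wd (a-1) b. gl q l (v @ [True])) else 0)
                        + (if b \<ge> 1 then (\<Sum>v\<in>Wd a (b-1). gl q l (v @ [False])) else 0)"
    unfolding Phi_def using assms by (intro Wd_split) auto
  have "(a = 1 \<and> b = 0) \<or> (a = 0 \<and> b = 1)" using assms by auto
  then show ?thesis
    unfolding s Cl_def using Wd00 gl_single by (auto simp: Rp_def ballot_0)
qed

lemma Phi_closed:
  "1 \<le> a + b \<Longrightarrow> Phi q a b l = Cl q a b l"
proof (induction "a + b" arbitrary: a b l rule: less_induct)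
  case less
  show ?case
  proof (cases "a + b = 1")
    case True then show ?thesis by (rule Phi_base)
  next
    case False
    then have n2: "a + b \<ge> 2" using less.prems by simp
    have IH: "Phi q a' b' l' = Cl q a' b' l'" if "a' + b' < a + b" "1 \<le> a' + b'" for a' b' l'
      using less.hyps that by blast
    have U: "a \<ge> 1 \<Longrightarrow> Phi q (a-1) b l' = Cl q (a-1) b l'" for l' using IH n2 by simp
    have D: "b \<ge> 1 \<Longrightarrow> Phi q a (b-1) l' = Cl q a (b-1) l'" for l' using IH n2 by simp
    have R: "Phi q a b l = (if a \<ge> 1 then (if (b \<le> a-1) = l then Cl q (a-1) b l + q * Cl q (a-1) b (\<not>l) else 0) else 0)
     + (if b \<ge> 1 then (if (b \<le> a) = l then Cl q a (b-1) l + q * Cl q a (b-1) (\<not>l) else 0) else 0)"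
    proof -
      have P: "Phi q a b l = (if a \<ge> 1 then (if (b \<le> a-1) = l then Phi q (a-1) b l + q * Phi q (a-1) b (\<not>l) else 0) else 0)
     + (if b \<ge> 1 then (if (b \<le> a) = l then Phi q a (b-1) l + q * Phi q a (b-1) (\<not>l) else 0) else 0)"
        by (rule Phi_rec[OF n2])
      show ?thesis
      proof (cases "a \<ge> 1")
        case ha: True
        show ?thesis
        proof (cases "b \<ge> 1")
          case hb: True
          show ?thesis using P by (simp only: U[OF ha] D[OF hb])
        next
          case hb: False
          show ?thesis using P hb by (simp only: U[OF ha] if_False)
        qed
      next
        case ha: False
        show ?thesis
        proof (cases "b \<ge> 1")
          case hb: True
          show ?thesis using P ha by (simp only: D[OF hb] if_False)
        next
          case hb: False
          show ?thesis using P ha hb by (simp only: if_False)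
        qed
      qed
    qed
    consider "b + 1 < a" | "a = b + 1" | "a = b" | "b = a + 1" | "a + 1 < b" by linarith
    then show ?thesis
    proof cases
      case 1
      then show ?thesis unfolding R Cl_def using L1[OF 1, of "1+q"] by auto
    next
      case 2
      then have "b \<ge> 1" using n2 by simp
      then show ?thesis unfolding R Cl_def using L2[of b "1+q"] 2 by (auto simp: algebra_simps)
    next
      case 3
      then have "a \<ge> 1" using n2 by simp
      then show ?thesis unfolding R Cl_def using L3[of a "1+q"] 3 by auto
    next
      case 4
      then have "a \<ge> 1" using n2 by simp
      then show ?thesis unfolding R Cl_def using L2[of a "1+q"] 4 by (auto simp: algebra_simps)
    next
      case 5
      then show ?thesis unfolding R Cl_def using L1[OF 5, of "1+q"] by auto
    qed
  qed
qed


definition sv :: "(nat \<times> nat \<Rightarrow> nat) \<Rightarrow> nat \<Rightarrow> bool" where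
  "sv \<tau> j = (\<tau> (1, j) < \<tau> (2, j))"

lemma rs_neq:
  assumes "row_standard n \<tau>" "j \<in> {1..n}"
  shows "\<tau> (1, j) \<noteq> \<tau> (2, j)"
proof -
  have inj: "inj_on \<tau> (boxes n)" using assms(1) unfolding row_standard_def bij_betw_def by blast
  have m: "(1,j) \<in> boxes n" "(2,j) \<in> boxes n" using assms(2) by (simp_all add: boxes_def)
  show ?thesis using inj_onD[OF inj _ m] by auto
qed

lemma least1: "(LEAST r. r \<ge> 1 \<and> stop_cond n \<tau> c c' r) = 1" if "stop_cond n \<tau> c c' 1"
  by (rule Least_equality) (use that in auto)

lemma inv_pair_unfold:
  assumes "(LEAST r. r \<ge> 1 \<and> stop_cond n \<tau> c c' r) = 1"
  shows "is_inv_pair n \<tau> c c' \<longleftrightarrow> (c \<in> boxes n \<and> c' \<in> boxes n \<and> c \<noteq> c' \<and> snd c = snd c' \<and> \<tau> c < \<tau> c' \<and>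
      (((\<not> exists_box n c 1 \<or> \<not> exists_box n c' 1) \<and> below c c') \<or>
       (exists_box n c 1 \<and> exists_box n c' 1 \<and> \<tau> (shift c 1) > \<tau> (shift c' 1))))"
  unfolding is_inv_pair_def Let_def assms by (rule refl)

lemma inv_pair_basic:
  assumes "is_inv_pair n \<tau> c c'"
  shows "c \<in> boxes n \<and> c' \<in> boxes n \<and> c \<noteq> c' \<and> snd c = snd c' \<and> \<tau> c < \<tau> c'"
  using assms unfolding is_inv_pair_def by blast

lemma inv_pair_char:
  assumes rs: "row_standard n \<tau>"
  shows "is_inv_pair n \<tau> c c' \<longleftrightarrow> (\<exists>i i' j. c = (i,j) \<and> c' = (i',j) \<and> i \<in> {1,2} \<and> i' \<in> {1,2} \<and> i \<noteq> i'
     \<and> j \<in> {1..n} \<and> \<tau> (i,j) < \<tau> (i',j) \<and> (if j < n then \<tau> (i,j+1) > \<tau> (i',j+1) else i > i'))"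
proof -
  have inj: "inj_on \<tau> (boxes n)" using rs unfolding row_standard_def bij_betw_def by blast
  show ?thesis
  proof
    assume H: "is_inv_pair n \<tau> c c'"
    obtain i j where c: "c = (i,j)" by (cases c)
    obtain i' j' where c': "c' = (i',j')" by (cases c')
    have b: "i \<in> {1,2}" "i' \<in> {1,2}" "j \<in> {1..n}" "j' = j" "i \<noteq> i'" "\<tau> (i,j) < \<tau> (i',j)"
      using inv_pair_basic[OF H] c c' by (auto simp: boxes_def)
    have st: "stop_cond n \<tau> c c' 1"
    proof (cases "j < n")
      case True
      then have mm: "(i, j+1) \<in> boxes n" "(i', j+1) \<in> boxes n" using b by (auto simp: boxes_def)
      have "\<tau> (i, j+1) \<noteq> \<tau> (i', j+1)" using inj_onD[OF inj _ mm] b by auto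
      then show ?thesis using c c' b by (simp add: stop_cond_def shift_def)
    next
      case False
      then show ?thesis using c c' b by (simp add: stop_cond_def exists_box_def shift_def boxes_def)
    qed
    have L: "(LEAST r. r \<ge> 1 \<and> stop_cond n \<tau> c c' r) = 1" by (rule least1[OF st])
    have "(if j < n then \<tau> (i,j+1) > \<tau> (i',j+1) else i > i')"
    proof (cases "j < n")
      case True
      then have "exists_box n c 1" "exists_box n c' 1" using b c c' by (auto simp: exists_box_def shift_def boxes_def)
      then show ?thesis using H[unfolded inv_pair_unfold[OF L]] True c c' b(4) by (simp add: shift_def)
    next
      case False
      then have "\<not> exists_box n c 1" using b c by (auto simp: exists_box_def shift_def boxes_def)
      then show ?thesis using H[unfolded inv_pair_unfold[OF L]] False c c' by (simp add: below_def)
    qed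
    then show "\<exists>i i' j. c = (i,j) \<and> c' = (i',j) \<and> i \<in> {1,2} \<and> i' \<in> {1,2} \<and> i \<noteq> i'
     \<and> j \<in> {1..n} \<and> \<tau> (i,j) < \<tau> (i',j) \<and> (if j < n then \<tau> (i,j+1) > \<tau> (i',j+1) else i > i')"
      using b c c' by blast
  next
    assume "\<exists>i i' j. c = (i,j) \<and> c' = (i',j) \<and> i \<in> {1,2} \<and> i' \<in> {1,2} \<and> i \<noteq> i'
     \<and> j \<in> {1..n} \<and> \<tau> (i,j) < \<tau> (i',j) \<and> (if j < n then \<tau> (i,j+1) > \<tau> (i',j+1) else i > i')"
    then obtain i i' j where b: "c = (i,j)" "c' = (i',j)" "i \<in> {1,2}" "i' \<in> {1,2}" "i \<noteq> i'"
      "j \<in> {1..n}" "\<tau> (i,j) < \<tau> (i',j)" "(if j < n then \<tau> (i,j+1) > \<tau> (i',j+1) else i > i')" by blast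
    have st: "stop_cond n \<tau> c c' 1"
    proof (cases "j < n")
      case True
      then have mm: "(i, j+1) \<in> boxes n" "(i', j+1) \<in> boxes n" using b by (auto simp: boxes_def)
      have "\<tau> (i, j+1) \<noteq> \<tau> (i', j+1)" using inj_onD[OF inj _ mm] b by auto
      then show ?thesis using b by (simp add: stop_cond_def shift_def)
    next
      case False
      then show ?thesis using b by (simp add: stop_cond_def exists_box_def shift_def boxes_def)
    qed
    have L: "(LEAST r. r \<ge> 1 \<and> stop_cond n \<tau> c c' r) = 1" by (rule least1[OF st])
    show "is_inv_pair n \<tau> c c'"
    proof (cases "j < n")
      case True
      then have "exists_box n c 1" "exists_box n c' 1" using b by (auto simp: exists_box_def shift_def boxes_def)
      then show ?thesis unfolding inv_pair_unfold[OF L] using True b by (simp add: shift_def boxes_def)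
    next
      case False
      then have "\<not> exists_box n c 1" using b by (auto simp: exists_box_def shift_def boxes_def)
      then show ?thesis unfolding inv_pair_unfold[OF L] using False b by (auto simp: below_def boxes_def)
    qed
  qed
qed

definition pj :: "(nat \<times> nat \<Rightarrow> nat) \<Rightarrow> nat \<Rightarrow> (nat \<times> nat) \<times> (nat \<times> nat)" where
  "pj \<tau> j = (if sv \<tau> j then ((1,j),(2,j)) else ((2,j),(1,j)))"

lemma inv_set:
  assumes rs: "row_standard n \<tau>"
  shows "{(c, c'). is_inv_pair n \<tau> c c'} = pj \<tau> ` {j\<in>{1..n}. if j < n then sv \<tau> j \<noteq> sv \<tau> (j+1) else \<not> sv \<tau> j}"
proof -
  have ne: "\<tau> (1, k) \<noteq> \<tau> (2, k)" if "k \<in> {1..n}" for k using rs_neq[OF rs that] .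
  show ?thesis
  proof (rule set_eqI, clarify)
    fix c c'
    show "((c, c') \<in> {(c, c'). is_inv_pair n \<tau> c c'}) =
          ((c, c') \<in> pj \<tau> ` {j \<in> {1..n}. if j < n then sv \<tau> j \<noteq> sv \<tau> (j + 1) else \<not> sv \<tau> j})"
      unfolding mem_Collect_eq case_prod_conv inv_pair_char[OF rs] image_iff pj_def
    proof
      assume "\<exists>i i' j. c = (i, j) \<and> c' = (i', j) \<and> i \<in> {1, 2} \<and> i' \<in> {1, 2} \<and> i \<noteq> i' \<and>
        j \<in> {1..n} \<and> \<tau> (i, j) < \<tau> (i', j) \<and> (if j < n then \<tau> (i', j + 1) < \<tau> (i, j + 1) else i' < i)"
      then obtain i i' j where b: "c = (i,j)" "c' = (i',j)" "i \<in> {1,2}" "i' \<in> {1,2}" "i \<noteq> i'"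
      "j \<in> {1..n}" "\<tau> (i,j) < \<tau> (i',j)" "(if j < n then \<tau> (i,j+1) > \<tau> (i',j+1) else i > i')" by blast
      have "j < n \<Longrightarrow> j + 1 \<in> {1..n}" using b by auto
      then have "j < n \<Longrightarrow> \<tau> (1, j+1) \<noteq> \<tau> (2, j+1)" using ne by blast
      then show "\<exists>x\<in>{j \<in> {1..n}. if j < n then sv \<tau> j \<noteq> sv \<tau> (j + 1) else \<not> sv \<tau> j}.
              (c, c') = (if sv \<tau> x then ((1, x), 2, x) else ((2, x), 1, x))"
        using b by (intro bexI[of _ j]) (auto simp: sv_def split: if_splits)
    next
      assume "\<exists>x\<in>{j \<in> {1..n}. if j < n then sv \<tau> j \<noteq> sv \<tau> (j + 1) else \<not> sv \<tau> j}.
              (c, c') = (if sv \<tau> x then ((1, x), 2, x) else ((2, x), 1, x))"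
      then obtain j where j: "j \<in> {1..n}" "if j < n then sv \<tau> j \<noteq> sv \<tau> (j + 1) else \<not> sv \<tau> j"
        "(c, c') = (if sv \<tau> j then ((1, j), 2, j) else ((2, j), 1, j))" by blast
      have "j < n \<Longrightarrow> j + 1 \<in> {1..n}" using j by auto
      then have n1: "j < n \<Longrightarrow> \<tau> (1, j+1) \<noteq> \<tau> (2, j+1)" using ne by blast
      have n0: "\<tau> (1, j) \<noteq> \<tau> (2, j)" using ne j by blast
      show "\<exists>i i' j. c = (i, j) \<and> c' = (i', j) \<and> i \<in> {1, 2} \<and> i' \<in> {1, 2} \<and> i \<noteq> i' \<and>
        j \<in> {1..n} \<and> \<tau> (i, j) < \<tau> (i', j) \<and> (if j < n then \<tau> (i', j + 1) < \<tau> (i, j + 1) else i' < i)"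
      proof (cases "sv \<tau> j")
        case True
        then show ?thesis using j n0 n1 by (intro exI[of _ 1] exI[of _ 2] exI[of _ j]) (auto simp: sv_def split: if_splits)
      next
        case False
        then show ?thesis using j n0 n1 by (intro exI[of _ 2] exI[of _ 1] exI[of _ j]) (auto simp: sv_def split: if_splits)
      qed
    qed
  qed
qed

lemma inv_count_formula:
  assumes rs: "row_standard n \<tau>" and n: "n \<ge> 1"
  shows "inv_count n \<tau> = card {j\<in>{1..<n}. sv \<tau> j \<noteq> sv \<tau> (j+1)} + (if sv \<tau> n then 0 else 1)"
proof -
  have inj: "inj_on (pj \<tau>) X" for X by (auto simp: inj_on_def pj_def split: if_splits)
  have eq: "{j\<in>{1..n}. if j < n then sv \<tau> j \<noteq> sv \<tau> (j+1) else \<not> sv \<tau> j}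
     = {j\<in>{1..<n}. sv \<tau> j \<noteq> sv \<tau> (j+1)} \<union> (if sv \<tau> n then {} else {n})"
    using n by (auto split: if_splits)
  show ?thesis
    unfolding inv_count_def inv_set[OF rs] card_image[OF inj] eq
    by (subst card_Un_disjoint) auto
qed


fun chg :: "bool list \<Rightarrow> nat" where
  "chg (x # y # zs) = (if x \<noteq> y then 1 else 0) + chg (y # zs)"
| "chg _ = 0"

definition hgt :: "bool list \<Rightarrow> int" where "hgt w = int (cT w) - int (cF w)"

definition dl :: "bool list \<Rightarrow> bool list" where
  "dl w = map (\<lambda>p. 1 \<le> hgt (take p w)) (filter (\<lambda>p. \<not> w ! p) [0..<length w])"

lemma chg_snoc: "chg (xs @ [y]) = chg xs + (if xs = [] then 0 else if last xs \<noteq> y then 1 else 0)"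
  by (induction xs rule: chg.induct) auto

lemma dl_snoc: "dl (w @ [c]) = dl w @ (if c then [] else [1 \<le> hgt w])"
proof -
  have f: "filter (\<lambda>p. \<not> (w @ [c]) ! p) [0..<length w] = filter (\<lambda>p. \<not> w ! p) [0..<length w]"
    by (rule filter_cong) (auto simp: nth_append)
  have m: "map (\<lambda>p. 1 \<le> hgt (take p (w @ [c]))) (filter (\<lambda>p. \<not> w ! p) [0..<length w])
         = map (\<lambda>p. 1 \<le> hgt (take p w)) (filter (\<lambda>p. \<not> w ! p) [0..<length w])"
    by (rule map_cong) auto
  show ?thesis unfolding dl_def using f m by simp
qed

lemma dl_Nil[simp]: "dl [] = []" by (simp add: dl_def)

definition InvP :: "bool list \<Rightarrow> int \<Rightarrow> bool option \<Rightarrow> nat \<Rightarrow> bool option \<Rightarrow> bool" where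
  "InvP w h l1 W l2 =
     ((w \<noteq> [] \<longrightarrow> h \<ge> 1 \<longrightarrow> l1 = Some True) \<and>
     (h \<le> -1 \<longrightarrow> l1 = Some False) \<and>
     (l2 \<noteq> None \<longrightarrow> l1 \<noteq> l2 \<longrightarrow> h \<ge> 1) \<and>
     (W = chg (dl w) + (if l2 \<noteq> None \<and> l1 \<noteq> l2 then 1 else 0)) \<and>
     (l2 = None \<longrightarrow> h = int (length w)) \<and>
     (l1 = None \<longleftrightarrow> w = []))"

definition L2 :: "bool list \<Rightarrow> bool option" where
  "L2 w = (if dl w = [] then None else Some (last (dl w)))"

lemma Inv_all: "stA w = (h, l1, W) \<Longrightarrow> InvP w h l1 W (L2 w)"
proof (induction w arbitrary: h l1 W rule: rev_induct)
  case Nil then show ?case by (simp add: InvP_def L2_def)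
next
  case (snoc c w h' l1' W')
  obtain h l1 W where st: "stA w = (h, l1, W)" by (cases "stA w") auto
  have hh: "hgt w = h" using stA_h[of w] st by (simp add: hgt_def)
  have I: "InvP w h l1 W (L2 w)" by (rule snoc.IH[OF st])
  define l2 where "l2 = L2 w"
  have A1: "w \<noteq> [] \<Longrightarrow> h \<ge> 1 \<Longrightarrow> l1 = Some True" using I by (simp add: InvP_def)
  have A2: "h \<le> -1 \<Longrightarrow> l1 = Some False" using I by (simp add: InvP_def)
  have A3: "l2 \<noteq> None \<Longrightarrow> l1 \<noteq> l2 \<Longrightarrow> h \<ge> 1" using I by (simp add: InvP_def l2_def)
  have A4: "W = chg (dl w) + (if l2 \<noteq> None \<and> l1 \<noteq> l2 then 1 else 0)" using I by (simp add: InvP_def l2_def)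
  have A5: "l2 = None \<Longrightarrow> h = int (length w)" using I by (simp add: InvP_def l2_def)
  have A6: "l1 = None \<longleftrightarrow> w = []" using I by (simp add: InvP_def)
  have l2n: "l2 = None \<longleftrightarrow> dl w = []" by (simp add: l2_def L2_def)
  have e0: "stA (w @ [c]) = stepA (h, l1, W) c" using st by (simp only: stA_snoc)
  have e: "(h', l1', W') = stepA (h, l1, W) c" by (rule trans[OF snoc.prems[symmetric] e0])
  have new: "h' = (if c then h + 1 else h - 1)" "l1' = Some (lab c h)"
    "W' = W + (if l1 \<noteq> None \<and> l1 \<noteq> Some (lab c h) then 1 else 0)"
    using e by (simp_all only: stepA.simps prod.inject)
  show ?case
  proof (cases c)
    case True
    have dl': "dl (w @ [c]) = dl w" using True by (simp add: dl_snoc)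
    have L2': "L2 (w @ [c]) = l2" by (simp add: L2_def dl' l2_def)
    have lab: "lab c h = (0 \<le> h)" using True by (simp add: lab_def)
    have G3: "h + 1 \<ge> 1" if "l2 \<noteq> None" "Some (0 \<le> h) \<noteq> l2"
    proof (rule ccontr)
      assume "\<not> h + 1 \<ge> 1"
      then have "h \<le> -1" by simp
      then have "l1 = Some False" using A2 by simp
      moreover have "Some (0 \<le> h) = Some False" using \<open>h \<le> -1\<close> by simp
      ultimately have "l1 \<noteq> l2" using that by simp
      then have "h \<ge> 1" using A3 that by simp
      then show False using \<open>h \<le> -1\<close> by simp
    qed
    have G4: "W + (if l1 \<noteq> None \<and> l1 \<noteq> Some (0 \<le> h) then 1 else 0)
           = chg (dl w) + (if l2 \<noteq> None \<and> Some (0 \<le> h) \<noteq> l2 then 1 else 0)"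
    proof (cases "h \<ge> 1")
      case h1: True
      then have "w \<noteq> []" using st by (cases w) auto
      then have "l1 = Some True" using A1 h1 by simp
      then show ?thesis using A4 h1 by auto
    next
      case h1: False
      show ?thesis
      proof (cases "h = 0")
        case h0: True
        show ?thesis
        proof (cases "w = []")
          case True
          then have "l1 = None" "l2 = None" using A6 l2n by auto
          then show ?thesis using A4 by simp
        next
          case False
          then have "l2 \<noteq> None" using A5 h0 by auto
          then have "l1 = l2" using A3 h0 by auto
          then show ?thesis using A4 h0 \<open>l2 \<noteq> None\<close> by auto
        qed
      next
        case h0: False
        then have hn: "h \<le> -1" using h1 by simp
        then have "l1 = Some False" using A2 by simp
        have "l2 \<noteq> None" using A5 hn by auto
        then have "l1 = l2" using A3 hn by auto
        then show ?thesis using A4 hn \<open>l1 = Some False\<close> \<open>l2 \<noteq> None\<close> by auto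
      qed
    qed
    show ?thesis unfolding InvP_def L2' dl' new lab using True G3 G4 A5 by auto
  next
    case False
    define lam where "lam = (1 \<le> h)"
    have dl': "dl (w @ [c]) = dl w @ [lam]" using False hh by (simp add: dl_snoc lam_def)
    have L2': "L2 (w @ [c]) = Some lam" by (simp add: L2_def dl')
    have lab: "lab c h = lam" using False by (simp add: lab_def lam_def)
    have G4: "W + (if l1 \<noteq> None \<and> l1 \<noteq> Some lam then 1 else 0) = chg (dl w @ [lam])"
    proof (cases "dl w = []")
      case True
      then have "l2 = None" using l2n by simp
      then have W0: "W = 0" using A4 True by simp
      show ?thesis
      proof (cases "w = []")
        case True then show ?thesis using A6 W0 \<open>dl w = []\<close> by simp
      next
        case wne: False
        then have "h \<ge> 1" using A5 \<open>l2 = None\<close> by (auto simp: Suc_le_eq)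
        then have "l1 = Some True" "lam" using A1 wne by (auto simp: lam_def)
        then show ?thesis using W0 \<open>dl w = []\<close> by simp
      qed
    next
      case dne: False
      then have l2v: "l2 = Some (last (dl w))" by (simp add: l2_def L2_def)
      show ?thesis
      proof (cases "l1 = l2")
        case True
        then show ?thesis using A4 l2v dne by (simp add: chg_snoc)
      next
        case ne: False
        then have "h \<ge> 1" using A3 l2v by simp
        then have wne: "w \<noteq> []" using st by (cases w) auto
        have "l1 = Some True" "lam" using A1[OF wne] \<open>h \<ge> 1\<close> by (auto simp: lam_def)
        then have "last (dl w) = False" using ne l2v by auto
        then show ?thesis using A4 l2v dne \<open>l1 = Some True\<close> \<open>lam\<close> by (simp add: chg_snoc)
      qed
    qed
    show ?thesis unfolding InvP_def L2' dl' new lab using False G4 by (auto simp: lam_def)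
  qed
qed

definition statA :: "bool list \<Rightarrow> nat" where
  "statA w = snd (snd (stA w)) + (if fst (snd (stA w)) = Some False then 1 else 0)"

lemma statA_dl:
  assumes "w \<in> Wd n n" "n \<ge> 1"
  shows "statA w = chg (dl w) + (if last (dl w) then 0 else 1) \<and> dl w \<noteq> []"
proof -
  obtain h l1 W where st: "stA w = (h, l1, W)" by (cases "stA w") auto
  have h0: "h = 0" using stA_h[of w] st assms by (simp add: Wd_def)
  have ne: "w \<noteq> []" using assms by (auto simp: Wd_def)
  have I: "InvP w h l1 W (L2 w)" by (rule Inv_all[OF st])
  have len: "length w = 2 * n" using len_cTF[of w] assms by (simp add: Wd_def)
  have dlne: "dl w \<noteq> []"
  proof
    assume "dl w = []"
    then have "h = int (length w)" using I by (simp add: InvP_def L2_def)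
    then show False using h0 len assms by simp
  qed
  have "l1 = Some (last (dl w))" and "W = chg (dl w)"
    using I h0 dlne by (auto simp: InvP_def L2_def)
  then show ?thesis unfolding statA_def using st dlne by auto
qed

lemma statA_sum:
  assumes "n \<ge> 1"
  shows "(\<Sum>w\<in>Wd n n. q ^ statA w) = (\<Sum>i=1..n. ballot (n - 1) (n - i) * (1 + q) ^ i)"
proof -
  have pt: "q ^ statA w = gl q True w + q * gl q False w" if "w \<in> Wd n n" for w
  proof -
    have "w \<noteq> []" using that assms by (auto simp: Wd_def)
    then obtain l where "fst (snd (stA w)) = Some l" using stA_l by blast
    then show ?thesis by (cases l) (auto simp: statA_def gl_def)
  qed
  have "(\<Sum>w\<in>Wd n n. q ^ statA w) = Phi q n n True + q * Phi q n n False"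
    unfolding Phi_def using pt by (simp add: sum.distrib sum_distrib_left)
  also have "\<dots> = (1 + q) * E (1 + q) n"
    using Phi_closed[of n n q] assms by (simp add: Cl_def algebra_simps)
  also have "\<dots> = (\<Sum>i=0..n. ballot (n - 1) (n - i) * (1 + q) ^ i)" by (rule xE[OF assms])
  also have "\<dots> = (\<Sum>i=1..n. ballot (n - 1) (n - i) * (1 + q) ^ i)"
    using sum.atLeast_Suc_atMost[of 0 n "\<lambda>i. ballot (n - 1) (n - i) * (1 + q) ^ i"] ballot_diag[OF assms] by simp
  finally show ?thesis .
qed


definition topset :: "nat \<Rightarrow> (nat \<times> nat \<Rightarrow> nat) \<Rightarrow> nat set" where
  "topset n \<tau> = (\<lambda>j. \<tau> (1, j)) ` {1..n}"
definition botset :: "nat \<Rightarrow> (nat \<times> nat \<Rightarrow> nat) \<Rightarrow> nat set" where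
  "botset n \<tau> = (\<lambda>j. \<tau> (2, j)) ` {1..n}"
definition word :: "nat \<Rightarrow> (nat \<times> nat \<Rightarrow> nat) \<Rightarrow> bool list" where
  "word n \<tau> = map (\<lambda>t. t \<in> topset n \<tau>) [1..<2*n+1]"

lemma uniq_list:
  fixes xs ys :: "nat list"
  assumes "sorted_wrt (<) xs" "sorted_wrt (<) ys" "set xs = set ys"
  shows "xs = ys"
  using assms sorted_distinct_set_unique strict_sorted_iff by blast

lemma strict_mono_count:
  fixes f :: "nat \<Rightarrow> nat"
  assumes mono: "\<And>i j. i \<in> {1..n} \<Longrightarrow> j \<in> {1..n} \<Longrightarrow> i < j \<Longrightarrow> f i < f j"
    and j: "j \<in> {1..n}"
  shows "j \<le> card {i\<in>{1..n}. f i < v} \<longleftrightarrow> f j < v"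
proof
  assume "f j < v"
  then have "{1..j} \<subseteq> {i\<in>{1..n}. f i < v}" using mono j
    by (auto) (metis atLeastAtMost_iff le_eq_less_or_eq order.strict_trans)
  then show "j \<le> card {i\<in>{1..n}. f i < v}" using card_mono[of "{i\<in>{1..n}. f i < v}" "{1..j}"] by simp
next
  assume c: "j \<le> card {i\<in>{1..n}. f i < v}"
  show "f j < v"
  proof (rule ccontr)
    assume "\<not> f j < v"
    then have "{i\<in>{1..n}. f i < v} \<subseteq> {1..<j}" using mono j
      by auto (metis atLeastAtMost_iff not_le order.strict_trans2 le_eq_less_or_eq)
    then have "card {i\<in>{1..n}. f i < v} \<le> j - 1" using card_mono[of "{1..<j}"] by fastforce
    then show False using c j by auto
  qed
qed

lemma strict_mono_below:
  fixes f :: "nat \<Rightarrow> nat"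
  assumes mono: "\<And>i j. i \<in> {1..n} \<Longrightarrow> j \<in> {1..n} \<Longrightarrow> i < j \<Longrightarrow> f i < f j"
    and j: "j \<in> {1..n}"
  shows "card {i\<in>{1..n}. f i < f j} = j - 1"
proof -
  have "{i\<in>{1..n}. f i < f j} = {1..<j}" using mono j
    by auto (metis atLeastAtMost_iff linorder_neqE_nat order.asym)
  then show ?thesis by simp
qed

context
  fixes n \<tau> assumes rs: "row_standard n \<tau>"
begin

lemma rs_inj: "inj_on \<tau> (boxes n)" using rs unfolding row_standard_def bij_betw_def by blast
lemma rs_img: "\<tau> ` boxes n = {1..2*n}" using rs unfolding row_standard_def bij_betw_def by blast
lemma rs_mono: "i \<in> {1,2} \<Longrightarrow> j \<in> {1..n} \<Longrightarrow> j' \<in> {1..n} \<Longrightarrow> j < j' \<Longrightarrow> \<tau> (i, j) < \<tau> (i, j')"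
proof -
  assume a: "i \<in> {1,2}" "j \<in> {1..n}" "j' \<in> {1..n}" "j < j'"
  then have "(i, j) \<in> boxes n" "(i, j') \<in> boxes n" by (simp_all add: boxes_def)
  then show ?thesis using rs a(4) unfolding row_standard_def by blast
qed
lemma rs_range: "i \<in> {1,2} \<Longrightarrow> j \<in> {1..n} \<Longrightarrow> \<tau> (i, j) \<in> {1..2*n}"
proof -
  assume a: "i \<in> {1,2}" "j \<in> {1..n}"
  then have "(i, j) \<in> boxes n" by (simp add: boxes_def)
  then show ?thesis using rs_img by blast
qed

lemma top_bot_disj: "topset n \<tau> \<inter> botset n \<tau> = {}"
proof -
  { fix j j' assume a: "j \<in> {1..n}" "j' \<in> {1..n}" "\<tau> (1, j) = \<tau> (2, j')"
    have m: "(1, j) \<in> boxes n" "(2, j') \<in> boxes n" using a by (simp_all add: boxes_def)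
    have "(1::nat, j) = (2, j')" by (rule inj_onD[OF rs_inj a(3) m])
    then have False by simp }
  then have "\<And>j j'. j \<in> {1..n} \<Longrightarrow> j' \<in> {1..n} \<Longrightarrow> \<tau> (1, j) \<noteq> \<tau> (2, j')" by blast
  then show ?thesis unfolding topset_def botset_def by blast
qed

lemma top_bot_un: "topset n \<tau> \<union> botset n \<tau> = {1..2*n}"
proof -
  have "boxes n = (\<lambda>j. (1,j)) ` {1..n} \<union> (\<lambda>j. (2,j)) ` {1..n}" unfolding boxes_def by blast
  then have "\<tau> ` boxes n = topset n \<tau> \<union> botset n \<tau>" unfolding topset_def botset_def by (simp only: image_Un image_image)
  then show ?thesis using rs_img by simp
qed

lemma card_top: "card (topset n \<tau>) = n"
proof -
  have "inj_on (\<lambda>j. \<tau> (1, j)) {1..n}"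
  proof (rule inj_onI)
    fix x y assume a: "x \<in> {1..n}" "y \<in> {1..n}" "\<tau> (1, x) = \<tau> (1, y)"
    have m: "(1, x) \<in> boxes n" "(1, y) \<in> boxes n" using a by (simp_all add: boxes_def)
    have "(1::nat, x) = (1, y)" by (rule inj_onD[OF rs_inj a(3) m])
    then show "x = y" by simp
  qed
  then show ?thesis by (simp add: topset_def card_image)
qed

lemma card_bot: "card (botset n \<tau>) = n"
proof -
  have "inj_on (\<lambda>j. \<tau> (2, j)) {1..n}"
  proof (rule inj_onI)
    fix x y assume a: "x \<in> {1..n}" "y \<in> {1..n}" "\<tau> (2, x) = \<tau> (2, y)"
    have m: "(2, x) \<in> boxes n" "(2, y) \<in> boxes n" using a by (simp_all add: boxes_def)
    have "(2::nat, x) = (2, y)" by (rule inj_onD[OF rs_inj a(3) m])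
    then show "x = y" by simp
  qed
  then show ?thesis by (simp add: botset_def card_image)
qed

lemma cT_take_word: "p \<le> 2*n \<Longrightarrow> cT (take p (word n \<tau>)) = card (topset n \<tau> \<inter> {1..p})"
proof -
  assume p: "p \<le> 2*n"
  have tu: "take p [1..<2*n+1] = [1..<1+p]" by (rule take_upt) (use p in simp)
  have t: "take p (word n \<tau>) = map (\<lambda>t. t \<in> topset n \<tau>) [1..<p+1]"
    unfolding word_def take_map tu by (simp add: add.commute)
  have su: "set [1..<p+1] = {1..p}" by auto
  have "cT (take p (word n \<tau>)) = length (filter (\<lambda>t. t \<in> topset n \<tau>) [1..<p+1])"
    unfolding t cT_def by (simp add: filter_map comp_def)
  also have "\<dots> = card ({t. t \<in> topset n \<tau>} \<inter> set [1..<p+1])" by (rule distinct_length_filter) simp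
  finally show ?thesis unfolding su by (simp add: Collect_mem_eq)
qed

lemma cF_take_word: "p \<le> 2*n \<Longrightarrow> cF (take p (word n \<tau>)) = card (botset n \<tau> \<inter> {1..p})"
proof -
  assume p: "p \<le> 2*n"
  have tu: "take p [1..<2*n+1] = [1..<1+p]" by (rule take_upt) (use p in simp)
  have t: "take p (word n \<tau>) = map (\<lambda>t. t \<in> topset n \<tau>) [1..<p+1]"
    unfolding word_def take_map tu by (simp add: add.commute)
  have "{x. x \<notin> topset n \<tau>} \<inter> {1..p} = botset n \<tau> \<inter> {1..p}"
    using top_bot_disj top_bot_un p by auto
  have su: "set [1..<p+1] = {1..p}" by auto
  have "cF (take p (word n \<tau>)) = length (filter (\<lambda>t. t \<notin> topset n \<tau>) [1..<p+1])"
    unfolding t cF_def by (simp add: filter_map comp_def)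
  also have "\<dots> = card ({t. t \<notin> topset n \<tau>} \<inter> set [1..<p+1])" by (rule distinct_length_filter) simp
  finally show ?thesis unfolding su using \<open>{x. x \<notin> topset n \<tau>} \<inter> {1..p} = botset n \<tau> \<inter> {1..p}\<close> by simp
qed

lemma word_Wd: "word n \<tau> \<in> Wd n n"
proof -
  have l: "length (word n \<tau>) = 2*n" by (simp add: word_def)
  have "cT (word n \<tau>) = n \<and> cF (word n \<tau>) = n"
  proof -
    have a: "topset n \<tau> \<inter> {1..2*n} = topset n \<tau>" "botset n \<tau> \<inter> {1..2*n} = botset n \<tau>"
      using top_bot_un by blast+
    show "cT (word n \<tau>) = n \<and> cF (word n \<tau>) = n"
      using cT_take_word[of "2*n"] cF_take_word[of "2*n"] l card_top card_bot a by simp_all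
  qed
  then show ?thesis by (simp add: Wd_def)
qed

end


lemma chg_map_upt: "chg (map f [1..<m+1]) = card {j\<in>{1..<m}. f j \<noteq> f (j+1)}"
proof (induction m)
  case 0 then show ?case by simp
next
  case (Suc m)
  have l: "[1..<Suc m + 1] = [1..<m+1] @ [m+1]" by simp
  have c: "{j\<in>{1..<Suc m}. f j \<noteq> f (j+1)} = {j\<in>{1..<m}. f j \<noteq> f (j+1)} \<union> (if m \<ge> 1 \<and> f m \<noteq> f (m+1) then {m} else {})"
    by (auto simp: less_Suc_eq split: if_splits)
  show ?case
  proof (cases "m = 0")
    case True then show ?thesis by simp
  next
    case False
    have lst: "last (map f [1..<m+1]) = f m" using False by (simp add: last_map)
    have ne: "map f [1..<m+1] \<noteq> []" using False by simp
    have e1: "chg (map f [1..<Suc m + 1]) = chg (map f [1..<m+1]) + (if f m \<noteq> f (m+1) then 1 else 0)"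
      using chg_snoc[of "map f [1..<m+1]" "f (m+1)"] lst ne l by (simp del: upt_Suc)
    have e2: "card {j\<in>{1..<Suc m}. f j \<noteq> f (j+1)} = card {j\<in>{1..<m}. f j \<noteq> f (j+1)} + (if f m \<noteq> f (m+1) then 1 else 0)"
      unfolding c using False by (subst card_Un_disjoint) auto
    show ?thesis unfolding e1 e2 Suc.IH ..
  qed
qed

context
  fixes n \<tau> assumes rs: "row_standard n \<tau>"
begin

lemma inj_row: "i \<in> {1,2} \<Longrightarrow> inj_on (\<lambda>j. \<tau> (i, j)) {1..n}"
proof (rule inj_onI)
  fix x y assume i: "i \<in> {1,2}" and a: "x \<in> {1..n}" "y \<in> {1..n}" "\<tau> (i, x) = \<tau> (i, y)"
  have m: "(i, x) \<in> boxes n" "(i, y) \<in> boxes n" using a i by (simp_all add: boxes_def)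
  have "(i, x) = (i, y)" by (rule inj_onD[OF rs_inj[OF rs] a(3) m])
  then show "x = y" by simp
qed

lemma word_nth: "p < 2*n \<Longrightarrow> word n \<tau> ! p = (p + 1 \<in> topset n \<tau>)"
  by (simp add: word_def del: upt_Suc)

lemma len_word: "length (word n \<tau>) = 2*n" by (simp add: word_def)

lemma filter_word: "filter (\<lambda>p. \<not> word n \<tau> ! p) [0..<2*n] = map (\<lambda>j. \<tau> (2, j) - 1) [1..<n+1]"
proof (rule uniq_list)
  show "sorted_wrt (<) (filter (\<lambda>p. \<not> word n \<tau> ! p) [0..<2*n])"
    by (rule sorted_wrt_filter) simp
  have "sorted_wrt (\<lambda>x y. \<tau> (2, x) - 1 < \<tau> (2, y) - 1) [1..<n+1]"
  proof (rule sorted_wrt_mono_rel[OF _ sorted_wrt_upt])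
    fix x y assume "x \<in> set [1..<n+1]" "y \<in> set [1..<n+1]" "x < y"
    then have "\<tau> (2, x) < \<tau> (2, y)" "\<tau> (2, x) \<ge> 1" using rs_mono[OF rs, of 2 x y] rs_range[OF rs, of 2 x] by auto
    then show "\<tau> (2, x) - 1 < \<tau> (2, y) - 1" by simp
  qed
  then show "sorted_wrt (<) (map (\<lambda>j. \<tau> (2, j) - 1) [1..<n+1])" by (simp add: sorted_wrt_map)
  have "set (filter (\<lambda>p. \<not> word n \<tau> ! p) [0..<2*n]) = {p. p < 2*n \<and> p + 1 \<notin> topset n \<tau>}"
    using word_nth by auto
  also have "\<dots> = {p. p + 1 \<in> botset n \<tau>}"
    using top_bot_disj[OF rs] top_bot_un[OF rs] by fastforce
  also have "\<dots> = (\<lambda>j. \<tau> (2, j) - 1) ` {1..n}"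
  proof -
    have "\<tau> (2, j) \<ge> 1" if "j \<in> {1..n}" for j using rs_range[OF rs, of 2 j] that by auto
    then show ?thesis unfolding botset_def by force
  qed
  also have "\<dots> = set (map (\<lambda>j. \<tau> (2, j) - 1) [1..<n+1])" by auto
  finally show "set (filter (\<lambda>p. \<not> word n \<tau> ! p) [0..<2*n]) = set (map (\<lambda>j. \<tau> (2, j) - 1) [1..<n+1])" .
qed

lemma hgt_label:
  assumes j: "j \<in> {1..n}"
  shows "(1 \<le> hgt (take (\<tau> (2, j) - 1) (word n \<tau>))) = sv \<tau> j"
proof -
  define p where "p = \<tau> (2, j) - 1"
  have r: "\<tau> (2, j) \<in> {1..2*n}" using rs_range[OF rs, of 2 j] j by simp
  then have p: "p \<le> 2*n" unfolding p_def by auto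
  have tr: "\<And>i. i \<in> {1..n} \<Longrightarrow> \<tau> (1, i) \<ge> 1" "\<And>i. i \<in> {1..n} \<Longrightarrow> \<tau> (2, i) \<ge> 1"
    using rs_range[OF rs, of 1] rs_range[OF rs, of 2] by auto
  have t1: "topset n \<tau> \<inter> {1..p} = (\<lambda>i. \<tau> (1, i)) ` {i\<in>{1..n}. \<tau> (1, i) < \<tau> (2, j)}"
    unfolding topset_def p_def using tr r by force
  have t2: "botset n \<tau> \<inter> {1..p} = (\<lambda>i. \<tau> (2, i)) ` {i\<in>{1..n}. \<tau> (2, i) < \<tau> (2, j)}"
    unfolding botset_def p_def using tr r by force
  have c1: "cT (take p (word n \<tau>)) = card {i\<in>{1..n}. \<tau> (1, i) < \<tau> (2, j)}"
    unfolding cT_take_word[OF rs p] t1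
    by (rule card_image) (rule inj_on_subset[OF inj_row], auto)
  have c2: "cF (take p (word n \<tau>)) = j - 1"
    unfolding cF_take_word[OF rs p] t2
  proof -
    have mono2: "\<And>i j'. i\<in>{1..n} \<Longrightarrow> j'\<in>{1..n} \<Longrightarrow> i<j' \<Longrightarrow> \<tau> (2,i) < \<tau> (2,j')"
      using rs_mono[OF rs] by simp
    have "card ((\<lambda>i. \<tau> (2, i)) ` {i\<in>{1..n}. \<tau> (2, i) < \<tau> (2, j)}) = card {i\<in>{1..n}. \<tau> (2, i) < \<tau> (2, j)}"
      by (rule card_image) (rule inj_on_subset[OF inj_row], auto)
    also have "\<dots> = j - 1" by (rule strict_mono_below[OF mono2 j])
    finally show "card ((\<lambda>i. \<tau> (2, i)) ` {i\<in>{1..n}. \<tau> (2, i) < \<tau> (2, j)}) = j - 1" .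
  qed
  have "(1 \<le> hgt (take p (word n \<tau>))) = (j \<le> card {i\<in>{1..n}. \<tau> (1, i) < \<tau> (2, j)})"
    unfolding hgt_def c1 c2 using j by auto
  also have "\<dots> = sv \<tau> j" unfolding sv_def by (rule strict_mono_count[OF rs_mono[OF rs] j]) auto
  finally show ?thesis unfolding p_def .
qed

lemma dl_word: "dl (word n \<tau>) = map (sv \<tau>) [1..<n+1]"
proof -
  have "dl (word n \<tau>) = map (\<lambda>p. 1 \<le> hgt (take p (word n \<tau>))) (map (\<lambda>j. \<tau> (2, j) - 1) [1..<n+1])"
    unfolding dl_def len_word filter_word ..
  also have "\<dots> = map (sv \<tau>) [1..<n+1]"
    unfolding map_map comp_def
  proof (rule map_cong[OF refl])
    fix j assume "j \<in> set [1..<n+1]"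
    then have "j \<in> {1..n}" by auto
    then show "(1 \<le> hgt (take (\<tau> (2, j) - 1) (word n \<tau>))) = sv \<tau> j" by (rule hgt_label)
  qed
  finally show ?thesis .
qed

lemma inv_eq: assumes "n \<ge> 1" shows "inv_count n \<tau> = statA (word n \<tau>)"
proof -
  have s: "statA (word n \<tau>) = chg (dl (word n \<tau>)) + (if last (dl (word n \<tau>)) then 0 else 1)"
    using statA_dl[OF word_Wd[OF rs] assms] by simp
  have l: "last (map (sv \<tau>) [1..<n+1]) = sv \<tau> n" using assms by (simp add: last_map)
  show ?thesis unfolding s dl_word l chg_map_upt inv_count_formula[OF rs assms] ..
qed

end

declare upt_Suc[simp del]

lemma rs_zero: assumes "row_standard n \<tau>" "x \<notin> boxes n" shows "\<tau> x = 0"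
proof -
  have "\<forall>x. x \<notin> boxes n \<longrightarrow> \<tau> x = 0" using assms(1) unfolding row_standard_def by (rule conjunct1[OF conjunct2])
  then show ?thesis using assms(2) by blast
qed

lemma topset_word:
  assumes rs: "row_standard n \<tau>"
  shows "topset n \<tau> = {t\<in>{1..2*n}. word n \<tau> ! (t - 1)}"
proof -
  have sub: "topset n \<tau> \<subseteq> {1..2*n}" using top_bot_un[OF rs] by blast
  have "word n \<tau> ! (t - 1) = (t \<in> topset n \<tau>)" if "t \<in> {1..2*n}" for t
    using word_nth[OF rs, of "t - 1"] that by auto
  then show ?thesis using sub by blast
qed

lemma botset_eq:
  assumes rs: "row_standard n \<tau>"
  shows "botset n \<tau> = {1..2*n} - topset n \<tau>"
  using top_bot_un[OF rs] top_bot_disj[OF rs] by blast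

lemma row_list:
  assumes rs: "row_standard n \<tau>" and i: "i \<in> {1,2}"
  shows "map (\<lambda>j. \<tau> (i, j)) [1..<n+1] = sorted_list_of_set ((\<lambda>j. \<tau> (i, j)) ` {1..n})"
proof -
  have "sorted_wrt (\<lambda>x y. \<tau> (i, x) < \<tau> (i, y)) [1..<n+1]"
  proof (rule sorted_wrt_mono_rel[OF _ sorted_wrt_upt])
    fix x y assume "x \<in> set [1..<n+1]" "y \<in> set [1..<n+1]" "x < y"
    then show "\<tau> (i, x) < \<tau> (i, y)" using rs_mono[OF rs i, of x y] by auto
  qed
  then have s: "sorted_wrt (<) (map (\<lambda>j. \<tau> (i, j)) [1..<n+1])" by (simp add: sorted_wrt_map)
  have st: "set (map (\<lambda>j. \<tau> (i, j)) [1..<n+1]) = (\<lambda>j. \<tau> (i, j)) ` {1..n}" by auto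
  have c: "card ((\<lambda>j. \<tau> (i, j)) ` {1..n}) = n" using card_image[OF inj_row[OF rs i]] by simp
  show ?thesis
    using sorted_list_of_set_unique[of "(\<lambda>j. \<tau> (i, j)) ` {1..n}" "map (\<lambda>j. \<tau> (i, j)) [1..<n+1]"] s st c
    by simp
qed

lemma word_inj:
  assumes rs: "row_standard n \<tau>" and rs': "row_standard n \<tau>'" and eq: "word n \<tau> = word n \<tau>'"
  shows "\<tau> = \<tau>'"
proof -
  have T: "topset n \<tau> = topset n \<tau>'" using topset_word[OF rs] topset_word[OF rs'] eq by simp
  have B: "botset n \<tau> = botset n \<tau>'" using botset_eq[OF rs] botset_eq[OF rs'] T by simp
  have L1: "map (\<lambda>j. \<tau> (1, j)) [1..<n+1] = map (\<lambda>j. \<tau>' (1, j)) [1..<n+1]"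
    using row_list[OF rs, of 1] row_list[OF rs', of 1] T by (simp add: topset_def)
  have L2: "map (\<lambda>j. \<tau> (2, j)) [1..<n+1] = map (\<lambda>j. \<tau>' (2, j)) [1..<n+1]"
    using row_list[OF rs, of 2] row_list[OF rs', of 2] B by (simp add: botset_def)
  show ?thesis
  proof
    fix x :: "nat \<times> nat"
    obtain i j where x: "x = (i, j)" by (cases x)
    show "\<tau> x = \<tau>' x"
    proof (cases "x \<in> boxes n")
      case True
      then have ij: "i = 1 \<or> i = 2" "j \<in> {1..n}" using x by (auto simp: boxes_def)
      have jj: "j - 1 < length [1..<n+1]" "[1..<n+1] ! (j - 1) = j" using ij by (auto simp: nth_upt)
      have "\<tau> (1, j) = \<tau>' (1, j)" "\<tau> (2, j) = \<tau>' (2, j)"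
        using arg_cong[OF L1, of "\<lambda>xs. xs ! (j - 1)"] arg_cong[OF L2, of "\<lambda>xs. xs ! (j - 1)"] jj
        by simp_all
      then show ?thesis using ij x by auto
    next
      case False
      then show ?thesis using rs_zero[OF rs] rs_zero[OF rs'] by simp
    qed
  qed
qed

definition Aw :: "nat \<Rightarrow> bool list \<Rightarrow> nat set" where "Aw n w = {t\<in>{1..2*n}. w ! (t - 1)}"
definition Bw :: "nat \<Rightarrow> bool list \<Rightarrow> nat set" where "Bw n w = {t\<in>{1..2*n}. \<not> w ! (t - 1)}"
definition tau_of :: "nat \<Rightarrow> bool list \<Rightarrow> nat \<times> nat \<Rightarrow> nat" where
  "tau_of n w x = (if x \<in> boxes n then (if fst x = 1 then sorted_list_of_set (Aw n w) ! (snd x - 1)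
                   else sorted_list_of_set (Bw n w) ! (snd x - 1)) else 0)"

lemma nth_image:
  assumes "length xs = n"
  shows "(\<lambda>j. xs ! (j - 1)) ` {1..n} = set xs"
proof
  show "(\<lambda>j. xs ! (j - 1)) ` {1..n} \<subseteq> set xs" using assms by auto
  show "set xs \<subseteq> (\<lambda>j. xs ! (j - 1)) ` {1..n}"
  proof
    fix y assume "y \<in> set xs"
    then obtain k where k: "k < length xs" "xs ! k = y" by (auto simp: in_set_conv_nth)
    then have "Suc k \<in> {1..n}" "xs ! (Suc k - 1) = y" using assms by auto
    then show "y \<in> (\<lambda>j. xs ! (j - 1)) ` {1..n}" by (metis imageI)
  qed
qed

context
  fixes n w assumes wW: "w \<in> Wd n n"
begin

lemma lenw: "length w = 2*n" using len_cTF[of w] wW by (simp add: Wd_def)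

lemma card_Aw: "card (Aw n w) = n"
proof -
  have "Aw n w = Suc ` {i. i < length w \<and> w ! i}"
  proof (rule set_eqI)
    fix x
    show "x \<in> Aw n w \<longleftrightarrow> x \<in> Suc ` {i. i < length w \<and> w ! i}"
    proof
      assume "x \<in> Aw n w"
      then have "x = Suc (x - 1)" "x - 1 < length w" "w ! (x - 1)" unfolding Aw_def lenw by auto
      then show "x \<in> Suc ` {i. i < length w \<and> w ! i}" by blast
    next
      assume "x \<in> Suc ` {i. i < length w \<and> w ! i}"
      then obtain i where "x = Suc i" "i < length w" "w ! i" by blast
      then show "x \<in> Aw n w" unfolding Aw_def lenw by auto
    qed
  qed
  then have "card (Aw n w) = card {i. i < length w \<and> w ! i}" by (simp add: card_image)
  also have "\<dots> = cT w" unfolding cT_def length_filter_conv_card by simp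
  finally show ?thesis using wW by (simp add: Wd_def)
qed

lemma card_Bw: "card (Bw n w) = n"
proof -
  have "Bw n w = Suc ` {i. i < length w \<and> \<not> w ! i}"
  proof (rule set_eqI)
    fix x
    show "x \<in> Bw n w \<longleftrightarrow> x \<in> Suc ` {i. i < length w \<and> \<not> w ! i}"
    proof
      assume "x \<in> Bw n w"
      then have "x = Suc (x - 1)" "x - 1 < length w" "\<not> w ! (x - 1)" unfolding Bw_def lenw by auto
      then show "x \<in> Suc ` {i. i < length w \<and> \<not> w ! i}" by blast
    next
      assume "x \<in> Suc ` {i. i < length w \<and> \<not> w ! i}"
      then obtain i where "x = Suc i" "i < length w" "\<not> w ! i" by blast
      then show "x \<in> Bw n w" unfolding Bw_def lenw by auto
    qed
  qed
  then have "card (Bw n w) = card {i. i < length w \<and> \<not> w ! i}" by (simp add: card_image)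
  also have "\<dots> = cF w" unfolding cF_def length_filter_conv_card by simp
  finally show ?thesis using wW by (simp add: Wd_def)
qed


abbreviation "sA \<equiv> sorted_list_of_set (Aw n w)"
abbreviation "sB \<equiv> sorted_list_of_set (Bw n w)"

lemma fin: "finite (Aw n w)" "finite (Bw n w)" by (simp_all add: Aw_def Bw_def)
lemma lenAB: "length sA = n" "length sB = n" using card_Aw card_Bw by simp_all
lemma setAB: "set sA = Aw n w" "set sB = Bw n w" using fin by simp_all
lemma disjAB: "Aw n w \<inter> Bw n w = {}" by (auto simp: Aw_def Bw_def)
lemma unAB: "Aw n w \<union> Bw n w = {1..2*n}" by (auto simp: Aw_def Bw_def)
lemma distAB: "distinct sA" "distinct sB" by simp_all

lemma tau1: "j \<in> {1..n} \<Longrightarrow> tau_of n w (1, j) = sA ! (j - 1)"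
  by (simp add: tau_of_def boxes_def)
lemma tau2: "j \<in> {1..n} \<Longrightarrow> tau_of n w (2, j) = sB ! (j - 1)"
  by (simp add: tau_of_def boxes_def)

lemma img1: "(\<lambda>j. tau_of n w (1, j)) ` {1..n} = Aw n w"
proof -
  have "(\<lambda>j. tau_of n w (1, j)) ` {1..n} = (\<lambda>j. sA ! (j - 1)) ` {1..n}"
    using tau1 by (intro image_cong) auto
  also have "\<dots> = Aw n w" using nth_image[OF lenAB(1)] setAB by simp
  finally show ?thesis .
qed

lemma img2: "(\<lambda>j. tau_of n w (2, j)) ` {1..n} = Bw n w"
proof -
  have "(\<lambda>j. tau_of n w (2, j)) ` {1..n} = (\<lambda>j. sB ! (j - 1)) ` {1..n}"
    using tau2 by (intro image_cong) auto
  also have "\<dots> = Bw n w" using nth_image[OF lenAB(2)] setAB by simp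
  finally show ?thesis .
qed

lemma tau_rs: "row_standard n (tau_of n w)"
proof -
  have bx: "boxes n = (\<lambda>j. (1,j)) ` {1..n} \<union> (\<lambda>j. (2,j)) ` {1..n}" unfolding boxes_def by blast
  have img: "tau_of n w ` boxes n = {1..2*n}"
    unfolding bx image_Un image_image using img1 img2 unAB by simp
  have inj: "inj_on (tau_of n w) (boxes n)"
  proof (rule inj_onI)
    fix x y assume x: "x \<in> boxes n" and y: "y \<in> boxes n" and e: "tau_of n w x = tau_of n w y"
    obtain i j where xij: "x = (i, j)" "i = 1 \<or> i = 2" "j \<in> {1..n}" using x by (auto simp: boxes_def)
    obtain i' j' where yij: "y = (i', j')" "i' = 1 \<or> i' = 2" "j' \<in> {1..n}" using y by (auto simp: boxes_def)
    have jl: "j - 1 < n" "j' - 1 < n" using xij yij by auto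
    have "sA ! (j - 1) \<in> set sA" "sA ! (j' - 1) \<in> set sA" "sB ! (j - 1) \<in> set sB" "sB ! (j' - 1) \<in> set sB"
      using jl lenAB by simp_all
    then have inA: "sA ! (j - 1) \<in> Aw n w" "sA ! (j' - 1) \<in> Aw n w"
      and inB: "sB ! (j - 1) \<in> Bw n w" "sB ! (j' - 1) \<in> Bw n w" unfolding setAB by simp_all
    have vx: "tau_of n w x = (if i = 1 then sA ! (j - 1) else sB ! (j - 1))"
      using xij tau1[OF xij(3)] tau2[OF xij(3)] by auto
    have vy: "tau_of n w y = (if i' = 1 then sA ! (j' - 1) else sB ! (j' - 1))"
      using yij tau1[OF yij(3)] tau2[OF yij(3)] by auto
    have ll: "j - 1 < length sA" "j' - 1 < length sA" "j - 1 < length sB" "j' - 1 < length sB"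
      using jl by (simp_all add: card_Aw card_Bw)
    have ii: "i = i'"
    proof (rule ccontr)
      assume ne: "i \<noteq> i'"
      show False
      proof (cases "i = 1")
        case True
        then have "i' = 2" using ne yij(2) by simp
        then have "sA ! (j - 1) = sB ! (j' - 1)" using e vx vy True by simp
        then have "sA ! (j - 1) \<in> Aw n w \<inter> Bw n w" using inA(1) inB(2) by simp
        then show False using disjAB by simp
      next
        case False
        then have "i' = 1" using ne xij(2) yij(2) by auto
        then have "sB ! (j - 1) = sA ! (j' - 1)" using e vx vy False by simp
        then have "sB ! (j - 1) \<in> Aw n w \<inter> Bw n w" using inA(2) inB(1) by simp
        then show False using disjAB by simp
      qed
    qed
    have "j - 1 = j' - 1"
    proof (cases "i = 1")
      case True
      then have "sA ! (j - 1) = sA ! (j' - 1)" using e vx vy ii by simp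
      then show ?thesis using nth_eq_iff_index_eq[OF distAB(1) ll(1) ll(2)] by simp
    next
      case False
      then have "sB ! (j - 1) = sB ! (j' - 1)" using e vx vy ii by simp
      then show ?thesis using nth_eq_iff_index_eq[OF distAB(2) ll(3) ll(4)] by simp
    qed
    then have "j = j'" using xij(3) yij(3) by auto
    then show "x = y" using xij(1) yij(1) ii by simp
  qed
  have zero: "\<forall>x. x \<notin> boxes n \<longrightarrow> tau_of n w x = 0" by (simp add: tau_of_def)
  have mono: "\<forall>i j j'. (i, j) \<in> boxes n \<longrightarrow> (i, j') \<in> boxes n \<longrightarrow> j < j' \<longrightarrow> tau_of n w (i, j) < tau_of n w (i, j')"
  proof (intro allI impI)
    fix i j j' assume a: "(i, j) \<in> boxes n" "(i, j') \<in> boxes n" "j < j'"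
    then have ij: "i = 1 \<or> i = 2" "j \<in> {1..n}" "j' \<in> {1..n}" by (auto simp: boxes_def)
    then have l: "j - 1 < j' - 1" "j' - 1 < n" using a by auto
    have "sA ! (j - 1) < sA ! (j' - 1)"
      by (rule sorted_wrt_nth_less[OF strict_sorted_list_of_set l(1)]) (simp only: length_sorted_list_of_set card_Aw card_Bw l(2))
    moreover have "sB ! (j - 1) < sB ! (j' - 1)"
      by (rule sorted_wrt_nth_less[OF strict_sorted_list_of_set l(1)]) (simp only: length_sorted_list_of_set card_Aw card_Bw l(2))
    ultimately show "tau_of n w (i, j) < tau_of n w (i, j')" using ij tau1 tau2 by auto
  qed
  show ?thesis unfolding row_standard_def bij_betw_def using img inj zero mono by blast
qed

lemma word_tau: "word n (tau_of n w) = w"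
proof (rule nth_equalityI)
  show "length (word n (tau_of n w)) = length w" using lenw by (simp add: word_def)
  fix p assume "p < length (word n (tau_of n w))"
  then have p: "p < 2*n" by (simp add: word_def)
  have "word n (tau_of n w) ! p = (p + 1 \<in> Aw n w)"
    using word_nth[OF tau_rs p] img1 by (simp add: topset_def)
  also have "\<dots> = w ! p" using p by (simp add: Aw_def)
  finally show "word n (tau_of n w) ! p = w ! p" .
qed

end

lemma bij_word: "bij_betw (word n) {\<tau>. row_standard n \<tau>} (Wd n n)"
proof (rule bij_betwI')
  fix x y assume "x \<in> {\<tau>. row_standard n \<tau>}" "y \<in> {\<tau>. row_standard n \<tau>}"
  then show "(word n x = word n y) = (x = y)" using word_inj by blast
next
  fix x assume "x \<in> {\<tau>. row_standard n \<tau>}"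
  then show "word n x \<in> Wd n n" using word_Wd by blast
next
  fix y assume "y \<in> Wd n n"
  then show "\<exists>x\<in>{\<tau>. row_standard n \<tau>}. y = word n x" using tau_rs word_tau by (metis mem_Collect_eq)
qed


lemma ballot_closed:
  assumes "i \<in> {1..n}"
  shows "ballot (n - 1) (n - i) = (real i / real n) * real ((2*n - i - 1) choose (n - i))"
proof -
  have e1: "real (n - 1) - real (n - i) + 1 = real i" using assms by (simp add: of_nat_diff)
  have e2: "real (n - 1) + 1 = real n" using assms by (simp add: of_nat_diff)
  have e3: "n - 1 + (n - i) = 2*n - i - 1" using assms by auto
  have e4: "((2*n - i - 1) choose (n - 1)) = ((2*n - i - 1) choose (n - i))"
  proof -
    have "n - 1 \<le> 2*n - i - 1" using assms by auto
    then have "((2*n - i - 1) choose (n - 1)) = ((2*n - i - 1) choose (2*n - i - 1 - (n - 1)))"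
      by (rule binomial_symmetric)
    moreover have "2*n - i - 1 - (n - 1) = n - i" using assms by auto
    ultimately show ?thesis by simp
  qed
  show ?thesis unfolding ballot_def e1 e2 e3 e4 by simp
qed

theorem mainTheorem11:
  fixes n :: nat and q :: real
  assumes "n \<ge> 1"
  shows "(\<Sum>k\<in>{k. S n k \<noteq> {}}. real (card (S n k)) * q ^ k)
           = (\<Sum>i=1..n. ballot (n - 1) (n - i) * (1 + q) ^ i)
         \<and> (\<Sum>i=1..n. ballot (n - 1) (n - i) * (1 + q) ^ i)
           = (\<Sum>i=1..n. (real i / real n) * real ((2*n - i - 1) choose (n - i)) * (1 + q) ^ i)"
proof
  define RS where "RS = {\<tau>. row_standard n \<tau>}"
  have bij: "bij_betw (word n) RS (Wd n n)" unfolding RS_def by (rule bij_word)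
  have fin: "finite RS" using bij_betw_finite[OF bij] finite_Wd by simp
  have Sk: "S n k = {\<tau>\<in>RS. inv_count n \<tau> = k}" for k by (auto simp: S_def RS_def)
  have K: "{k. S n k \<noteq> {}} = inv_count n ` RS" by (auto simp: Sk)
  have "(\<Sum>k\<in>{k. S n k \<noteq> {}}. real (card (S n k)) * q ^ k)
      = (\<Sum>k\<in>inv_count n ` RS. (\<Sum>\<tau>\<in>{\<tau>\<in>RS. inv_count n \<tau> = k}. q ^ inv_count n \<tau>))"
  proof -
    have "(\<Sum>k\<in>{k. S n k \<noteq> {}}. real (card (S n k)) * q ^ k) = (\<Sum>k\<in>inv_count n ` RS. real (card (S n k)) * q ^ k)"
      by (simp only: K)
    also have "\<dots> = (\<Sum>k\<in>inv_count n ` RS. (\<Sum>\<tau>\<in>{\<tau>\<in>RS. inv_count n \<tau> = k}. q ^ inv_count n \<tau>))"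
    proof (rule sum.cong[OF refl])
      fix k
      have "(\<Sum>\<tau>\<in>{\<tau>\<in>RS. inv_count n \<tau> = k}. q ^ inv_count n \<tau>) = (\<Sum>\<tau>\<in>{\<tau>\<in>RS. inv_count n \<tau> = k}. q ^ k)"
        by (rule sum.cong) auto
      then show "real (card (S n k)) * q ^ k = (\<Sum>\<tau>\<in>{\<tau>\<in>RS. inv_count n \<tau> = k}. q ^ inv_count n \<tau>)"
        by (simp add: Sk)
    qed
    finally show ?thesis .
  qed
  also have "\<dots> = (\<Sum>\<tau>\<in>RS. q ^ inv_count n \<tau>)"
    by (rule sum.image_gen[OF fin, symmetric])
  also have "\<dots> = (\<Sum>\<tau>\<in>RS. q ^ statA (word n \<tau>))"
    by (intro sum.cong refl) (simp add: RS_def inv_eq[OF _ assms])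
  also have "\<dots> = (\<Sum>w\<in>Wd n n. q ^ statA w)"
    by (rule sum.reindex_bij_betw[OF bij])
  also have "\<dots> = (\<Sum>i=1..n. ballot (n - 1) (n - i) * (1 + q) ^ i)"
    by (rule statA_sum[OF assms])
  finally show "(\<Sum>k\<in>{k. S n k \<noteq> {}}. real (card (S n k)) * q ^ k)
           = (\<Sum>i=1..n. ballot (n - 1) (n - i) * (1 + q) ^ i)" .
next
  show "(\<Sum>i=1..n. ballot (n - 1) (n - i) * (1 + q) ^ i)
           = (\<Sum>i=1..n. (real i / real n) * real ((2*n - i - 1) choose (n - i)) * (1 + q) ^ i)"
  proof (rule sum.cong[OF refl])
    fix i assume "i \<in> {1..n}"
    show "ballot (n - 1) (n - i) * (1 + q) ^ i = (real i / real n) * real ((2*n - i - 1) choose (n - i)) * (1 + q) ^ i"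
      by (simp only: ballot_closed[OF \<open>i \<in> {1..n}\<close>])
  qed
qed


end
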